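(* Let $r \le n$ and $p \ge r$ be positive integers. Let $V \in \mathbb{R}^{n \times r}$, let $W \in \mathbb{R}^{n \times p}$, let $h: \mathbb{R}^{r} \to \mathbb{R}^{p}$ be any (feature) map, and define the correction map $H: \mathbb{R}^r \to \mathbb{R}^n$ by $H(z) = W h(z)$. Consider the set $$\mathcal{M}_r(V, H) = \{ V z + W h(z) \,:\, z \in \mathbb{R}^{r} \} \subset \mathbb{R}^{n}.$$ Let $Q = [q^{(1)}, \dots, q^{(k)}] \in \mathbb{R}^{n \times k}$ be a data matrix with singular values $\sigma_1 \ge \sigma_2 \ge \dots \ge \sigma_{\ell}$, where $\ell = \min(n, k)$ and $\ell \ge r$. Then $$\sum_{i=1}^{k} \min_{\hat{q}^{(i)} \in \mathcal{M}_r(V,H)} \|\hat{q}^{(i)} - q^{(i)}\|_2^2 \;\ge\; \sum_{i = p + r + 1}^{\ell} \sigma_i^2 ,$$ where the minimum is understood as an infimum and the right-hand side is an empty sum (equal to $0$) if $p + r \ge \ell$.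
   Context: $\|\cdot\|_2$ denotes the Euclidean norm. The singular values of $Q$ are listed in non-increasing order. In the paper's typical application $h$ is the quadratic feature map $z \mapsto (z_1z_1, z_1z_2, \dots, z_1 z_r, z_2 z_2, \dots, z_r z_r)^\top$ with $p = r(r+1)/2$, but the statement holds for an arbitrary map $h:\mathbb{R}^r\to\mathbb{R}^p$. *)

theory Defs
  imports "Jordan_Normal_Form.Char_Poly"
begin

text \<open>The eigenvalues
  with multiplicity are the roots of the (monic, real-split) characteristic polynomial.
  The list has length k; its first min(n,k) entries are the singular values
  sigma_1 >= ... >= sigma_l.\<close>
definition singular_values :: "real mat \<Rightarrow> real list" where
  "singular_values Q = map sqrt (THE xs. sorted_wrt (\<ge>) xs \<and>
      char_poly (transpose_mat Q * Q) = (\<Prod>a\<leftarrow>xs. [:- a, 1:]))"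

definition manifold_set :: "nat \<Rightarrow> real mat \<Rightarrow> real mat \<Rightarrow> (real vec \<Rightarrow> real vec) \<Rightarrow> real vec set" where
  "manifold_set r V W h = {V *\<^sub>v z + W *\<^sub>v h z | z. z \<in> carrier_vec r}"

definition sq_dist :: "nat \<Rightarrow> real vec \<Rightarrow> real vec \<Rightarrow> real" where
  "sq_dist n x y = (\<Sum>j<n. (x $ j - y $ j)^2)"

end

theory Submission
  imports Defs "Jordan_Normal_Form.Schur_Decomposition" "HOL-Combinatorics.List_Permutation"
begin


lemma real_sym_eigen:
  fixes A :: "real mat"
  assumes A: "A \<in> carrier_mat k k" and sym: "transpose_mat A = A" and k: "0 < k"
  shows "\<exists>e v. v \<in> carrier_vec k \<and> v \<noteq> 0\<^sub>v k \<and> A *\<^sub>v v = e \<cdot>\<^sub>v v"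
proof -
  define Ac where "Ac = map_mat complex_of_real A"
  have Ac: "Ac \<in> carrier_mat k k" using A by (simp add: Ac_def)
  obtain as where cp: "char_poly Ac = (\<Prod>a\<leftarrow>as. [:- a, 1:])" and len: "length as = k"
    using char_poly_factorized[OF Ac] by blast
  then obtain a where a: "a \<in> set as" using k by (cases as) auto
  have "poly (char_poly Ac) a = 0" unfolding cp using a
    by (simp add: poly_prod_list_zero_iff)
  hence "eigenvalue Ac a" using eigenvalue_root_char_poly[OF Ac] by simp
  then obtain v where v: "v \<in> carrier_vec k" "v \<noteq> 0\<^sub>v k" "Ac *\<^sub>v v = a \<cdot>\<^sub>v v"
    unfolding eigenvalue_def eigenvector_def using Ac by auto
  define s where "s = (\<Sum>i<k. cnj (v $ i) * (\<Sum>j<k. complex_of_real (A $$ (i,j)) * v $ j))"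
  define N where "N = (\<Sum>i<k. cnj (v $ i) * v $ i)"
  have entry: "\<And>i. i < k \<Longrightarrow> (\<Sum>j<k. complex_of_real (A $$ (i,j)) * v $ j) = a * v $ i"
  proof -
    fix i assume i: "i < k"
    have "(Ac *\<^sub>v v) $ i = a * v $ i" using v(3) i v(1) by simp
    moreover have "(Ac *\<^sub>v v) $ i = (\<Sum>j<k. complex_of_real (A $$ (i,j)) * v $ j)"
      using i Ac A v(1) unfolding Ac_def by (auto simp: scalar_prod_def lessThan_atLeast0 intro!: sum.cong)
    ultimately show "(\<Sum>j<k. complex_of_real (A $$ (i,j)) * v $ j) = a * v $ i" by simp
  qed
  have "s = (\<Sum>i<k. cnj (v $ i) * (a * v $ i))" unfolding s_def
    by (rule sum.cong) (auto simp: entry)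
  hence s1: "s = a * N" unfolding N_def
    by (simp add: sum_distrib_left mult.commute mult.left_commute)
  have symA: "\<And>i j. i < k \<Longrightarrow> j < k \<Longrightarrow> A $$ (i,j) = A $$ (j,i)"
    using sym A by (metis carrier_matD index_transpose_mat(1))
  have "cnj s = (\<Sum>i<k. v $ i * (\<Sum>j<k. complex_of_real (A $$ (i,j)) * cnj (v $ j)))"
    unfolding s_def by (simp add: cnj_sum)
  also have "\<dots> = (\<Sum>i<k. \<Sum>j<k. v $ i * complex_of_real (A $$ (i,j)) * cnj (v $ j))"
    by (simp add: sum_distrib_left mult.assoc)
  also have "\<dots> = (\<Sum>j<k. \<Sum>i<k. v $ i * complex_of_real (A $$ (i,j)) * cnj (v $ j))"
    by (rule sum.swap)
  also have "\<dots> = (\<Sum>j<k. cnj (v $ j) * (\<Sum>i<k. complex_of_real (A $$ (j,i)) * v $ i))"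
    by (auto simp: sum_distrib_left symA mult.commute mult.left_commute intro!: sum.cong)
  also have "\<dots> = s" unfolding s_def ..
  finally have s2: "cnj s = s" .
  have Nreal: "N = complex_of_real (\<Sum>i<k. (cmod (v $ i))^2)"
    unfolding N_def of_real_sum by (rule sum.cong[OF refl]) (metis complex_norm_square mult.commute)
  have "N \<noteq> 0"
  proof
    assume "N = 0"
    hence "(\<Sum>i<k. (cmod (v $ i))^2) = 0" using Nreal by (metis of_real_eq_0_iff)
    hence "\<forall>i\<in>{..<k}. (cmod (v $ i))^2 = 0" by (subst (asm) sum_nonneg_eq_0_iff) auto
    hence "v = 0\<^sub>v k" using v(1) by (intro eq_vecI) auto
    with v(2) show False by simp
  qed
  have "cnj N = N" using Nreal by (metis complex_cnj_complex_of_real)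
  from s2 have "cnj a * N = a * N" using s1 \<open>cnj N = N\<close> by (metis complex_cnj_mult)
  hence ar: "cnj a = a" using \<open>N \<noteq> 0\<close> by simp
  hence a_eq: "a = complex_of_real (Re a)" by (metis Reals_cnj_iff complex_is_Real_iff of_real_Re)
  have "char_poly Ac = map_poly of_real (char_poly A)"
    unfolding Ac_def using of_real_hom.char_poly_hom[OF A] by simp
  hence "complex_of_real (poly (char_poly A) (Re a)) = 0"
    using \<open>poly (char_poly Ac) a = 0\<close> a_eq by (metis of_real_hom.poly_map_poly)
  hence "eigenvalue A (Re a)" using eigenvalue_root_char_poly[OF A] by simp
  thus ?thesis unfolding eigenvalue_def eigenvector_def using A by auto
qed



lemma conjugate_real_vec[simp]: "conjugate (w :: real vec) = w"
  by (rule eq_vecI) (auto simp: conjugate_vec_def)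

lemma cscalar_real[simp]: "(v :: real vec) \<bullet>c w = v \<bullet> w"
  by (simp add: conjugate_vec_def)

lemma orth_extend:
  fixes v :: "real vec"
  assumes v: "v \<in> carrier_vec k" and v1: "v \<bullet> v = 1"
  shows "\<exists>W. W \<in> carrier_mat k k \<and> transpose_mat W * W = 1\<^sub>m k \<and> col W 0 = v"
proof -
  have v0: "v \<noteq> 0\<^sub>v k" using v1 by auto
  have k: "0 < k" using v v0 by (cases k) auto
  interpret cof_vec_space k "TYPE(real)" .
  define b where "b = basis_completion v"
  from basis_completion[OF v v0, folded b_def]
  have span_b: "span (set b) = carrier_vec k" and dist_b: "distinct b"
    and indep: "\<not> lin_dep (set b)" and b: "set b \<subseteq> carrier_vec k" and hdb: "hd b = v"
    and len_b: "length b = k" by auto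
  from hdb len_b k obtain vs where bv: "b = v # vs" by (cases b, auto)
  define ws where "ws = gram_schmidt k b"
  from gram_schmidt_result[OF b dist_b indep refl, folded ws_def]
  have ws: "set ws \<subseteq> carrier_vec k" "corthogonal ws" "length ws = k"
    by (auto simp: len_b)
  from gram_schmidt_hd[OF v, of vs, folded bv] have hdws: "hd ws = v" unfolding ws_def .
  define ws' where "ws' = map (\<lambda>w. (1 / sqrt (w \<bullet> w)) \<cdot>\<^sub>v w) ws"
  have ws'c: "set ws' \<subseteq> carrier_vec k" using ws(1) unfolding ws'_def by auto
  have lws': "length ws' = k" using ws unfolding ws'_def by simp
  define W where "W = mat_of_cols k ws'"
  have W: "W \<in> carrier_mat k k" unfolding W_def using lws' by auto
  have colW: "\<And>i. i < k \<Longrightarrow> col W i = ws' ! i"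
    unfolding W_def by (rule col_mat_of_cols) (auto simp: lws' intro!: subsetD[OF ws'c] nth_mem)
  have pos: "\<And>i. i < k \<Longrightarrow> ws ! i \<bullet> ws ! i > 0"
  proof -
    fix i assume i: "i < k"
    have "ws ! i \<in> carrier_vec k" using ws i by auto
    moreover have "ws ! i \<bullet> ws ! i \<noteq> 0" using corthogonalD[OF ws(2), of i i] ws(3) i by simp
    ultimately show "ws ! i \<bullet> ws ! i > 0"
      using conjugate_square_ge_0_vec[of "ws ! i"] by simp
  qed
  have orth: "\<And>i j. i < k \<Longrightarrow> j < k \<Longrightarrow> ws' ! i \<bullet> ws' ! j = (if i = j then 1 else 0)"
  proof -
    fix i j assume i: "i < k" and j: "j < k"
    have ci: "ws ! i \<in> carrier_vec k" and cj: "ws ! j \<in> carrier_vec k" using ws i j by auto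
    have "ws' ! i \<bullet> ws' ! j = (1 / sqrt (ws ! i \<bullet> ws ! i)) * (1 / sqrt (ws ! j \<bullet> ws ! j)) * (ws ! i \<bullet> ws ! j)"
      unfolding ws'_def using i j ws(3) ci cj
      by (simp add: smult_scalar_prod_distrib scalar_prod_smult_distrib)
    also have "\<dots> = (if i = j then 1 else 0)"
    proof (cases "i = j")
      case True
      have p: "ws ! i \<bullet> ws ! i > 0" using pos i by auto
      have "(1 / sqrt (ws ! i \<bullet> ws ! i)) * (1 / sqrt (ws ! i \<bullet> ws ! i)) = 1 / (ws ! i \<bullet> ws ! i)"
        using p by (simp add: real_sqrt_mult[symmetric])
      thus ?thesis using True p by simp
    next
      case False
      hence "ws ! i \<bullet> ws ! j = 0" using corthogonalD[OF ws(2), of i j] ws(3) i j by simp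
      thus ?thesis using False by simp
    qed
    finally show "ws' ! i \<bullet> ws' ! j = (if i = j then 1 else 0)" .
  qed
  have WW: "transpose_mat W * W = 1\<^sub>m k"
  proof (rule eq_matI)
    fix i j assume i: "i < dim_row (1\<^sub>m k)" and j: "j < dim_col (1\<^sub>m k)"
    hence i: "i < k" and j: "j < k" by auto
    have "(transpose_mat W * W) $$ (i, j) = col W i \<bullet> col W j"
      using i j W by simp
    also have "\<dots> = (if i = j then 1 else 0)" using orth[OF i j] colW i j by simp
    finally show "(transpose_mat W * W) $$ (i, j) = 1\<^sub>m k $$ (i, j)" using i j by simp
  qed (use W in auto)
  have "col W 0 = ws' ! 0" using colW k by simp
  also have "ws' ! 0 = (1 / sqrt (v \<bullet> v)) \<cdot>\<^sub>v v" unfolding ws'_def using hdws k ws(3)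
    by (cases ws) auto
  also have "\<dots> = v" using v1 by simp
  finally show ?thesis using W WW by blast
qed



lemma spectral:
  fixes A :: "real mat"
  assumes "A \<in> carrier_mat k k" "transpose_mat A = A"
  shows "\<exists>U D. U \<in> carrier_mat k k \<and> D \<in> carrier_mat k k \<and> transpose_mat U * U = 1\<^sub>m k
     \<and> diagonal_mat D \<and> A = U * D * transpose_mat U"
  using assms
proof (induction k arbitrary: A)
  case 0
  have "A = 1\<^sub>m 0 * 1\<^sub>m 0 * transpose_mat (1\<^sub>m 0)" using 0 by (intro eq_matI) auto
  moreover have "diagonal_mat (1\<^sub>m 0 :: real mat)" by (simp add: diagonal_mat_def)
  ultimately show ?case by (intro exI[of _ "1\<^sub>m 0"]) auto
next
  case (Suc n A)
  let ?k = "Suc n"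
  have A: "A \<in> carrier_mat ?k ?k" and symA: "transpose_mat A = A" using Suc by auto
  obtain e v where v: "v \<in> carrier_vec ?k" "v \<noteq> 0\<^sub>v ?k" "A *\<^sub>v v = e \<cdot>\<^sub>v v"
    using real_sym_eigen[OF A symA] by auto
  have vpos: "v \<bullet> v > 0" using conjugate_square_greater_0_vec[OF v(1)] v(2) by simp
  define v1 where "v1 = (1 / sqrt (v \<bullet> v)) \<cdot>\<^sub>v v"
  have v1c: "v1 \<in> carrier_vec ?k" unfolding v1_def using v by simp
  have "v1 \<bullet> v1 = (1 / sqrt (v \<bullet> v)) * (1 / sqrt (v \<bullet> v)) * (v \<bullet> v)"
    unfolding v1_def using v(1) by (simp add: smult_scalar_prod_distrib scalar_prod_smult_distrib)
  also have "\<dots> = 1" using vpos by (simp add: real_sqrt_mult[symmetric])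
  finally have v11: "v1 \<bullet> v1 = 1" .
  have Av1: "A *\<^sub>v v1 = e \<cdot>\<^sub>v v1" unfolding v1_def using v A
    by (simp add: mult_mat_vec smult_smult_assoc mult.commute)
  obtain W where W: "W \<in> carrier_mat ?k ?k" and WW: "transpose_mat W * W = 1\<^sub>m ?k"
    and W0: "col W 0 = v1" using orth_extend[OF v1c v11] by blast
  have Wt: "transpose_mat W \<in> carrier_mat ?k ?k" using W by simp
  have WWt: "W * transpose_mat W = 1\<^sub>m ?k" using mat_mult_left_right_inverse[OF Wt W WW] .
  define A' where "A' = transpose_mat W * A * W"
  have A': "A' \<in> carrier_mat ?k ?k" unfolding A'_def using W A by auto
  have A'2: "A' = transpose_mat W * (A * W)" unfolding A'_def using W A by simp
  have AW: "A * W \<in> carrier_mat ?k ?k" using A W by simp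
  have "transpose_mat A' = transpose_mat (A * W) * transpose_mat (transpose_mat W)"
    unfolding A'2 using transpose_mult[OF Wt AW] .
  also have "transpose_mat (A * W) = transpose_mat W * transpose_mat A"
    using transpose_mult[OF A W] .
  also have "(transpose_mat W * transpose_mat A) * transpose_mat (transpose_mat W) = A'"
    unfolding A'_def symA using W A by simp
  finally have symA': "transpose_mat A' = A'" .
  have A'col: "\<And>i. i < ?k \<Longrightarrow> A' $$ (i, 0) = (if i = 0 then e else 0)"
  proof -
    fix i assume i: "i < ?k"
    have "A' = transpose_mat W * (A * W)" unfolding A'_def using W A by simp
    hence "A' $$ (i, 0) = col W i \<bullet> col (A * W) 0" using i W A by simp
    also have "col (A * W) 0 = A *\<^sub>v v1" using col_mult2[OF A W, of 0] W0 by simp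
    also have "col W i \<bullet> (A *\<^sub>v v1) = e * (col W i \<bullet> col W 0)" using Av1 W0 W v1c
      by (simp add: scalar_prod_smult_distrib[of _ ?k])
    also have "col W i \<bullet> col W 0 = (transpose_mat W * W) $$ (i, 0)" using i W by simp
    also have "\<dots> = (if i = 0 then 1 else 0)" using WW i by simp
    finally show "A' $$ (i, 0) = (if i = 0 then e else 0)" by simp
  qed
  have A'sym: "\<And>i j. i < ?k \<Longrightarrow> j < ?k \<Longrightarrow> A' $$ (i, j) = A' $$ (j, i)"
    using symA' A' by (metis carrier_matD index_transpose_mat(1))
  define A3 where "A3 = mat n n (\<lambda>(i,j). A' $$ (Suc i, Suc j))"
  have A3: "A3 \<in> carrier_mat n n" unfolding A3_def by simp
  have symA3: "transpose_mat A3 = A3" unfolding A3_def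
    by (rule eq_matI) (auto simp: A'sym)
  obtain U3 D3 where U3: "U3 \<in> carrier_mat n n" and D3: "D3 \<in> carrier_mat n n"
    and UU3: "transpose_mat U3 * U3 = 1\<^sub>m n" and dD3: "diagonal_mat D3"
    and A3eq: "A3 = U3 * D3 * transpose_mat U3"
    using Suc.IH[OF A3 symA3] by blast
  define E where "E = mat 1 1 (\<lambda>_. e)"
  have E: "E \<in> carrier_mat 1 1" unfolding E_def by simp
  have A'blk: "A' = four_block_mat E (0\<^sub>m 1 n) (0\<^sub>m n 1) A3"
  proof (rule eq_matI)
    fix i j assume i: "i < dim_row (four_block_mat E (0\<^sub>m 1 n) (0\<^sub>m n 1) A3)"
      and j: "j < dim_col (four_block_mat E (0\<^sub>m 1 n) (0\<^sub>m n 1) A3)"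
    hence i: "i < ?k" and j: "j < ?k" using E A3 by auto
    show "A' $$ (i, j) = four_block_mat E (0\<^sub>m 1 n) (0\<^sub>m n 1) A3 $$ (i, j)"
    proof (cases "i = 0")
      case True
      then show ?thesis using A'col[OF j] A'sym[OF i j] i j E A3 by (auto simp: E_def)
    next
      case False
      show ?thesis
      proof (cases "j = 0")
        case True
        then show ?thesis using A'col[OF i] False i j E A3 by (auto simp: E_def)
      next
        case False': False
        obtain i' where i': "i = Suc i'" using False by (cases i) auto
        obtain j' where j': "j = Suc j'" using False' by (cases j) auto
        show ?thesis using i j E A3 i' j' by (auto simp: A3_def)
      qed
    qed
  qed (use A' E A3 in auto)
  define U1 where "U1 = four_block_mat (1\<^sub>m 1) (0\<^sub>m 1 n) (0\<^sub>m n 1) U3"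
  define D1 where "D1 = four_block_mat E (0\<^sub>m 1 n) (0\<^sub>m n 1) D3"
  have U1: "U1 \<in> carrier_mat ?k ?k" unfolding U1_def using U3 by auto
  have D1: "D1 \<in> carrier_mat ?k ?k" unfolding D1_def using D3 E by auto
  have U1t: "transpose_mat U1 = four_block_mat (1\<^sub>m 1) (0\<^sub>m 1 n) (0\<^sub>m n 1) (transpose_mat U3)"
    unfolding U1_def using U3 by (simp add: transpose_four_block_mat[of _ 1 1 _ n _ n])
  have "U1 * D1 = four_block_mat E (0\<^sub>m 1 n) (0\<^sub>m n 1) (U3 * D3)"
    unfolding U1_def D1_def using U3 D3 E
    by (simp add: mult_four_block_mat[of _ 1 1 _ n _ n _ _ 1 _ n])
  hence "U1 * D1 * transpose_mat U1 = four_block_mat E (0\<^sub>m 1 n) (0\<^sub>m n 1) (U3 * D3 * transpose_mat U3)"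
    unfolding U1t using U3 D3 E
    by (simp add: mult_four_block_mat[of _ 1 1 _ n _ n _ _ 1 _ n])
  hence A'eq: "A' = U1 * D1 * transpose_mat U1" using A'blk A3eq by simp
  have UU1: "transpose_mat U1 * U1 = 1\<^sub>m ?k"
  proof -
    have "transpose_mat U1 * U1 = four_block_mat (1\<^sub>m 1) (0\<^sub>m 1 n) (0\<^sub>m n 1) (transpose_mat U3)
       * four_block_mat (1\<^sub>m 1) (0\<^sub>m 1 n) (0\<^sub>m n 1) U3"
      unfolding U1t by (simp add: U1_def)
    also have "\<dots> = four_block_mat (1\<^sub>m 1) (0\<^sub>m 1 n) (0\<^sub>m n 1) (transpose_mat U3 * U3)"
      using U3 by (simp add: mult_four_block_mat[of _ 1 1 _ n _ n _ _ 1 _ n])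
    also have "\<dots> = 1\<^sub>m (1 + n)" unfolding UU3 by simp
    finally show ?thesis by simp
  qed
  have dD1: "diagonal_mat D1" unfolding diagonal_mat_def
  proof (intro allI impI)
    fix i j assume i: "i < dim_row D1" and j: "j < dim_col D1" and ij: "i \<noteq> j"
    show "D1 $$ (i, j) = 0"
      using i j ij D3 E dD3 unfolding D1_def diagonal_mat_def by (auto simp: E_def)
  qed
  define U where "U = W * U1"
  have U: "U \<in> carrier_mat ?k ?k" unfolding U_def using W U1 by auto
  have Ut: "transpose_mat U = transpose_mat U1 * transpose_mat W"
    unfolding U_def using W U1 by (simp add: transpose_mult)
  have "transpose_mat U * U = (transpose_mat U1 * transpose_mat W) * (W * U1)"
    using Ut unfolding U_def by simp
  also have "\<dots> = transpose_mat U1 * (transpose_mat W * W) * U1"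
    using W U1 by (simp add: assoc_mult_mat[of _ ?k ?k _ ?k _ ?k])
  also have "\<dots> = 1\<^sub>m ?k" using WW UU1 U1 by simp
  finally have UU: "transpose_mat U * U = 1\<^sub>m ?k" .
  have "A = (W * transpose_mat W) * A * (W * transpose_mat W)" using WWt A by simp
  also have "\<dots> = W * A' * transpose_mat W" unfolding A'_def using W A
    by (simp add: assoc_mult_mat[of _ ?k ?k _ ?k _ ?k])
  also have "\<dots> = W * (U1 * D1 * transpose_mat U1) * transpose_mat W" using A'eq by simp
  also have "\<dots> = (W * U1) * D1 * (transpose_mat U1 * transpose_mat W)" using W U1 D1
    by (simp add: assoc_mult_mat[of _ ?k ?k _ ?k _ ?k])
  also have "\<dots> = U * D1 * transpose_mat U" using Ut unfolding U_def by simp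
  finally show ?case using U D1 UU dD1 by blast
qed



lemma mat_mult_entry:
  fixes X Y :: "real mat"
  assumes "X \<in> carrier_mat a b" "Y \<in> carrier_mat b c" "i < a" "j < c"
  shows "(X * Y) $$ (i, j) = (\<Sum>l<b. X $$ (i, l) * Y $$ (l, j))"
  using assms by (auto simp: scalar_prod_def lessThan_atLeast0 intro!: sum.cong)

lemma svd_fun:
  fixes M :: "real mat"
  assumes M: "M \<in> carrier_mat n m"
  shows "\<exists>u \<mu> e. (\<forall>j<m. 0 \<le> \<mu> j)
    \<and> (\<forall>i<m. \<forall>i'<m. (\<Sum>j<m. u j i * u j i') = (if i = i' then 1 else 0))
    \<and> (\<forall>j<m. \<forall>r<n. (\<Sum>i<m. M $$ (r,i) * u j i) = sqrt (\<mu> j) * e j r)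
    \<and> (\<forall>j<m. \<forall>j'<m. (\<Sum>r<n. e j r * e j' r) = (if j = j' \<and> \<mu> j \<noteq> 0 then 1 else 0))
    \<and> char_poly (transpose_mat M * M) = (\<Prod>j\<leftarrow>[0..<m]. [:- \<mu> j, 1:])"
proof -
  define A where "A = transpose_mat M * M"
  have Mt: "transpose_mat M \<in> carrier_mat m n" using M by simp
  have A: "A \<in> carrier_mat m m" unfolding A_def using M by simp
  have symA: "transpose_mat A = A" unfolding A_def using transpose_mult[OF Mt M] by simp
  obtain U D where U: "U \<in> carrier_mat m m" and D: "D \<in> carrier_mat m m"
    and UU: "transpose_mat U * U = 1\<^sub>m m" and dD: "diagonal_mat D"
    and AUD: "A = U * D * transpose_mat U"
    using spectral[OF A symA] by blast
  have Ut: "transpose_mat U \<in> carrier_mat m m" using U by simp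
  have UUt: "U * transpose_mat U = 1\<^sub>m m" using mat_mult_left_right_inverse[OF Ut U UU] .
  define u where "u = (\<lambda>j i. U $$ (i, j))"
  define \<mu> where "\<mu> = (\<lambda>j. D $$ (j, j))"
  define MU where "MU = M * U"
  have MU: "MU \<in> carrier_mat n m" unfolding MU_def using M U by simp
  define w where "w = (\<lambda>j r. MU $$ (r, j))"
  have w_def': "\<And>j r. j < m \<Longrightarrow> r < n \<Longrightarrow> w j r = (\<Sum>i<m. M $$ (r,i) * u j i)"
    unfolding w_def MU_def u_def by (rule mat_mult_entry[OF M U])
  have "transpose_mat MU * MU = D"
  proof -
    have "transpose_mat MU = transpose_mat U * transpose_mat M"
      unfolding MU_def using transpose_mult[OF M U] .
    hence "transpose_mat MU * MU = (transpose_mat U * transpose_mat M) * (M * U)"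
      unfolding MU_def by simp
    also have "\<dots> = transpose_mat U * (transpose_mat M * (M * U))"
      by (rule assoc_mult_mat) (use U M in auto)
    also have "transpose_mat M * (M * U) = (transpose_mat M * M) * U"
      by (rule assoc_mult_mat[symmetric]) (use U M in auto)
    also have "transpose_mat U * ((transpose_mat M * M) * U) = transpose_mat U * (transpose_mat M * M) * U"
      by (rule assoc_mult_mat[symmetric]) (use U M in auto)
    also have "\<dots> = transpose_mat U * A * U" unfolding A_def ..
    also have "\<dots> = (transpose_mat U * U) * D * (transpose_mat U * U)"
      unfolding AUD using U D by (simp add: assoc_mult_mat[of _ m m _ m _ m])
    also have "\<dots> = D" using UU D by simp
    finally show ?thesis .
  qed
  hence ww: "\<And>j j'. j < m \<Longrightarrow> j' < m \<Longrightarrow> (\<Sum>r<n. w j r * w j' r) = (if j = j' then \<mu> j else 0)"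
  proof -
    fix j j' assume j: "j < m" and j': "j' < m"
    assume eq: "transpose_mat MU * MU = D"
    have "(transpose_mat MU * MU) $$ (j, j') = (\<Sum>r<n. w j r * w j' r)"
      unfolding w_def by (subst mat_mult_entry[of _ m n _ m]) (use MU j j' in \<open>auto intro!: sum.cong\<close>)
    moreover have "D $$ (j, j') = (if j = j' then \<mu> j else 0)"
      using dD D j j' unfolding diagonal_mat_def \<mu>_def by auto
    ultimately show "(\<Sum>r<n. w j r * w j' r) = (if j = j' then \<mu> j else 0)" using eq by simp
  qed
  have mu_nonneg: "\<And>j. j < m \<Longrightarrow> 0 \<le> \<mu> j"
  proof -
    fix j assume j: "j < m"
    have "\<mu> j = (\<Sum>r<n. (w j r)^2)" using ww[OF j j] by (simp add: power2_eq_square)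
    thus "0 \<le> \<mu> j" by (simp add: sum_nonneg)
  qed
  have w0: "\<And>j r. j < m \<Longrightarrow> r < n \<Longrightarrow> \<mu> j = 0 \<Longrightarrow> w j r = 0"
  proof -
    fix j r assume j: "j < m" and r: "r < n" and z: "\<mu> j = 0"
    have "(\<Sum>r<n. (w j r)^2) = 0" using ww[OF j j] z by (simp add: power2_eq_square)
    hence "\<forall>r\<in>{..<n}. (w j r)^2 = 0" by (subst (asm) sum_nonneg_eq_0_iff) auto
    thus "w j r = 0" using r by simp
  qed
  define e where "e = (\<lambda>j r. if \<mu> j = 0 then 0 else w j r / sqrt (\<mu> j))"
  have P1: "\<forall>j<m. 0 \<le> \<mu> j" using mu_nonneg by auto
  have P2: "\<forall>i<m. \<forall>i'<m. (\<Sum>j<m. u j i * u j i') = (if i = i' then 1 else 0)"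
  proof (intro allI impI)
    fix i i' assume i: "i < m" and i': "i' < m"
    have "(U * transpose_mat U) $$ (i, i') = (\<Sum>j<m. u j i * u j i')"
      unfolding u_def by (subst mat_mult_entry[of _ m m _ m]) (use U i i' in \<open>auto intro!: sum.cong\<close>)
    thus "(\<Sum>j<m. u j i * u j i') = (if i = i' then 1 else 0)" using UUt i i' by simp
  qed
  have P3: "\<forall>j<m. \<forall>r<n. (\<Sum>i<m. M $$ (r,i) * u j i) = sqrt (\<mu> j) * e j r"
  proof (intro allI impI)
    fix j r assume j: "j < m" and r: "r < n"
    show "(\<Sum>i<m. M $$ (r,i) * u j i) = sqrt (\<mu> j) * e j r"
    proof (cases "\<mu> j = 0")
      case True thus ?thesis using w0[OF j r] w_def'[OF j r] by (simp add: e_def)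
    next
      case False
      hence "sqrt (\<mu> j) \<noteq> 0" using mu_nonneg[OF j] by simp
      thus ?thesis using w_def'[OF j r] False by (simp add: e_def)
    qed
  qed
  have P4: "\<forall>j<m. \<forall>j'<m. (\<Sum>r<n. e j r * e j' r) = (if j = j' \<and> \<mu> j \<noteq> 0 then 1 else 0)"
  proof (intro allI impI)
    fix j j' assume j: "j < m" and j': "j' < m"
    show "(\<Sum>r<n. e j r * e j' r) = (if j = j' \<and> \<mu> j \<noteq> 0 then 1 else 0)"
    proof (cases "\<mu> j = 0 \<or> \<mu> j' = 0")
      case True thus ?thesis by (auto simp: e_def)
    next
      case False
      have "(\<Sum>r<n. e j r * e j' r) = (\<Sum>r<n. w j r * w j' r) / (sqrt (\<mu> j) * sqrt (\<mu> j'))"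
        using False by (simp add: e_def sum_divide_distrib)
      also have "\<dots> = (if j = j' \<and> \<mu> j \<noteq> 0 then 1 else 0)"
        using ww[OF j j'] False mu_nonneg[OF j] by (auto simp: real_sqrt_mult[symmetric])
      finally show ?thesis .
    qed
  qed
  have "similar_mat_wit A D U (transpose_mat U)"
    unfolding similar_mat_wit_def Let_def using A D U Ut UU UUt AUD by auto
  hence "char_poly A = char_poly D" by (intro char_poly_similar) (auto simp: similar_mat_def)
  also have "char_poly D = (\<Prod>a\<leftarrow>diag_mat D. [:- a, 1:])"
  proof (rule char_poly_upper_triangular[OF D])
    show "upper_triangular D" using dD D unfolding diagonal_mat_def upper_triangular_def by auto
  qed
  also have "diag_mat D = map \<mu> [0..<m]" unfolding diag_mat_def \<mu>_def using D by simp
  finally have P5: "char_poly (transpose_mat M * M) = (\<Prod>j\<leftarrow>[0..<m]. [:- \<mu> j, 1:])"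
    unfolding A_def by (simp add: comp_def)
  show ?thesis using P1 P2 P3 P4 P5 by blast
qed



lemma sum_swap3:
  "(\<Sum>i\<in>A. \<Sum>l\<in>B. \<Sum>l'\<in>C. F i l l') = (\<Sum>l\<in>B. \<Sum>l'\<in>C. \<Sum>i\<in>A. F i l l')"
proof -
  have "(\<Sum>i\<in>A. \<Sum>l\<in>B. \<Sum>l'\<in>C. F i l l') = (\<Sum>l\<in>B. \<Sum>i\<in>A. \<Sum>l'\<in>C. F i l l')"
    by (rule sum.swap)
  also have "\<dots> = (\<Sum>l\<in>B. \<Sum>l'\<in>C. \<Sum>i\<in>A. F i l l')"
    by (rule sum.cong[OF refl], rule sum.swap)
  finally show ?thesis .
qed

lemma sq_sum_expand:
  fixes q :: "nat \<Rightarrow> real" and f :: "nat \<Rightarrow> nat \<Rightarrow> real" and a :: "nat \<Rightarrow> real"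
  assumes orth: "\<And>l l'. l < N \<Longrightarrow> l' < N \<Longrightarrow> l \<noteq> l' \<Longrightarrow> (\<Sum>i<n. f l i * f l' i) = 0"
  shows "(\<Sum>i<n. (q i - (\<Sum>l<N. a l * f l i))^2)
       = (\<Sum>i<n. (q i)^2) - 2 * (\<Sum>l<N. a l * (\<Sum>i<n. f l i * q i))
         + (\<Sum>l<N. (a l)^2 * (\<Sum>i<n. (f l i)^2))"
proof -
  have "(\<Sum>i<n. (\<Sum>l<N. a l * f l i)^2) = (\<Sum>i<n. \<Sum>l<N. \<Sum>l'<N. a l * a l' * (f l i * f l' i))"
    by (simp add: power2_eq_square sum_product mult_ac)
  also have "\<dots> = (\<Sum>l<N. \<Sum>l'<N. \<Sum>i<n. a l * a l' * (f l i * f l' i))"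
    by (rule sum_swap3)
  also have "\<dots> = (\<Sum>l<N. \<Sum>l'<N. a l * a l' * (\<Sum>i<n. f l i * f l' i))"
    by (simp add: sum_distrib_left)
  also have "\<dots> = (\<Sum>l<N. \<Sum>l'<N. if l' = l then a l * a l * (\<Sum>i<n. f l i * f l i) else 0)"
    by (rule sum.cong[OF refl], rule sum.cong[OF refl]) (auto simp: orth)
  also have "\<dots> = (\<Sum>l<N. (a l)^2 * (\<Sum>i<n. (f l i)^2))"
    by (simp add: power2_eq_square)
  finally have cross: "(\<Sum>i<n. (\<Sum>l<N. a l * f l i)^2) = (\<Sum>l<N. (a l)^2 * (\<Sum>i<n. (f l i)^2))" .
  have "(\<Sum>i<n. q i * (\<Sum>l<N. a l * f l i)) = (\<Sum>i<n. \<Sum>l<N. a l * (f l i * q i))"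
    by (simp add: sum_distrib_left mult_ac)
  also have "\<dots> = (\<Sum>l<N. \<Sum>i<n. a l * (f l i * q i))" by (rule sum.swap)
  also have "\<dots> = (\<Sum>l<N. a l * (\<Sum>i<n. f l i * q i))" by (simp add: sum_distrib_left)
  finally have lin: "(\<Sum>i<n. q i * (\<Sum>l<N. a l * f l i)) = (\<Sum>l<N. a l * (\<Sum>i<n. f l i * q i))" .
  have "(\<Sum>i<n. (q i - (\<Sum>l<N. a l * f l i))^2)
      = (\<Sum>i<n. (q i)^2 - 2 * (q i * (\<Sum>l<N. a l * f l i)) + (\<Sum>l<N. a l * f l i)^2)"
    by (rule sum.cong[OF refl]) (simp add: power2_diff)
  also have "\<dots> = (\<Sum>i<n. (q i)^2) - 2 * (\<Sum>i<n. q i * (\<Sum>l<N. a l * f l i)) + (\<Sum>i<n. (\<Sum>l<N. a l * f l i)^2)"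
    by (simp add: sum.distrib sum_subtractf sum_distrib_left)
  finally show ?thesis using cross lin by simp
qed

definition unit_or_zero :: "nat \<Rightarrow> nat \<Rightarrow> (nat \<Rightarrow> nat \<Rightarrow> real) \<Rightarrow> bool" where
  "unit_or_zero N n f \<longleftrightarrow> (\<forall>l<N. \<forall>l'<N. l \<noteq> l' \<longrightarrow> (\<Sum>i<n. f l i * f l' i) = 0)
     \<and> (\<forall>l<N. (\<Sum>i<n. (f l i)^2) = 1 \<or> (\<forall>i<n. f l i = 0))"

lemma proj_lower:
  assumes uz: "unit_or_zero N n f"
  shows "(\<Sum>i<n. (q i - (\<Sum>l<N. a l * f l i))^2) \<ge> (\<Sum>i<n. (q i)^2) - (\<Sum>l<N. (\<Sum>i<n. f l i * q i)^2)"
proof -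
  have orth: "\<And>l l'. l < N \<Longrightarrow> l' < N \<Longrightarrow> l \<noteq> l' \<Longrightarrow> (\<Sum>i<n. f l i * f l' i) = 0"
    using uz unfolding unit_or_zero_def by auto
  have trm: "\<And>l. l < N \<Longrightarrow> - ((\<Sum>i<n. f l i * q i)^2) \<le>
      (a l)^2 * (\<Sum>i<n. (f l i)^2) - 2 * (a l * (\<Sum>i<n. f l i * q i))"
  proof -
    fix l assume l: "l < N"
    show "- ((\<Sum>i<n. f l i * q i)^2) \<le> (a l)^2 * (\<Sum>i<n. (f l i)^2) - 2 * (a l * (\<Sum>i<n. f l i * q i))"
    proof (cases "(\<Sum>i<n. (f l i)^2) = 1")
      case True
      have "0 \<le> (a l - (\<Sum>i<n. f l i * q i))^2" by simp
      thus ?thesis using True by (simp add: power2_diff algebra_simps)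
    next
      case False
      hence "\<forall>i<n. f l i = 0" using uz l unfolding unit_or_zero_def by auto
      thus ?thesis by simp
    qed
  qed
  have "(\<Sum>l<N. - ((\<Sum>i<n. f l i * q i)^2)) \<le>
        (\<Sum>l<N. (a l)^2 * (\<Sum>i<n. (f l i)^2) - 2 * (a l * (\<Sum>i<n. f l i * q i)))"
    by (rule sum_mono) (use trm in auto)
  also have "\<dots> = (\<Sum>l<N. (a l)^2 * (\<Sum>i<n. (f l i)^2)) - 2 * (\<Sum>l<N. a l * (\<Sum>i<n. f l i * q i))"
    by (simp add: sum_subtractf sum_distrib_left)
  finally have *: "- (\<Sum>l<N. (\<Sum>i<n. f l i * q i)^2) \<le>
     (\<Sum>l<N. (a l)^2 * (\<Sum>i<n. (f l i)^2)) - 2 * (\<Sum>l<N. a l * (\<Sum>i<n. f l i * q i))"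
    by (simp add: sum_negf)
  have eq: "(\<Sum>i<n. (q i - (\<Sum>l<N. a l * f l i))^2)
       = (\<Sum>i<n. (q i)^2) - 2 * (\<Sum>l<N. a l * (\<Sum>i<n. f l i * q i))
         + (\<Sum>l<N. (a l)^2 * (\<Sum>i<n. (f l i)^2))" by (rule sq_sum_expand[OF orth])
  show ?thesis using eq * by linarith
qed

lemma bessel:
  assumes uz: "unit_or_zero N n f"
  shows "(\<Sum>l<N. (\<Sum>i<n. f l i * q i)^2) \<le> (\<Sum>i<n. (q i)^2)"
proof -
  have orth: "\<And>l l'. l < N \<Longrightarrow> l' < N \<Longrightarrow> l \<noteq> l' \<Longrightarrow> (\<Sum>i<n. f l i * f l' i) = 0"
    using uz unfolding unit_or_zero_def by auto
  have t: "\<And>l. l < N \<Longrightarrow> ((\<Sum>i<n. f l i * q i))^2 * (\<Sum>i<n. (f l i)^2) = (\<Sum>i<n. f l i * q i)^2"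
  proof -
    fix l assume l: "l < N"
    show "((\<Sum>i<n. f l i * q i))^2 * (\<Sum>i<n. (f l i)^2) = (\<Sum>i<n. f l i * q i)^2"
    proof (cases "(\<Sum>i<n. (f l i)^2) = 1")
      case True thus ?thesis by simp
    next
      case False
      hence "\<forall>i<n. f l i = 0" using uz l unfolding unit_or_zero_def by auto
      thus ?thesis by simp
    qed
  qed
  have "0 \<le> (\<Sum>i<n. (q i - (\<Sum>l<N. (\<Sum>i<n. f l i * q i) * f l i))^2)" by (simp add: sum_nonneg)
  also have "\<dots> = (\<Sum>i<n. (q i)^2) - 2 * (\<Sum>l<N. (\<Sum>i<n. f l i * q i) * (\<Sum>i<n. f l i * q i))
         + (\<Sum>l<N. ((\<Sum>i<n. f l i * q i))^2 * (\<Sum>i<n. (f l i)^2))"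
    by (rule sq_sum_expand[OF orth])
  also have "(\<Sum>l<N. ((\<Sum>i<n. f l i * q i))^2 * (\<Sum>i<n. (f l i)^2)) = (\<Sum>l<N. (\<Sum>i<n. f l i * q i)^2)"
    by (rule sum.cong[OF refl]) (simp add: t)
  also have "(\<Sum>l<N. (\<Sum>i<n. f l i * q i) * (\<Sum>i<n. f l i * q i)) = (\<Sum>l<N. (\<Sum>i<n. f l i * q i)^2)"
    by (simp add: power2_eq_square)
  finally show ?thesis by simp
qed

lemma parseval:
  fixes u :: "nat \<Rightarrow> nat \<Rightarrow> real"
  assumes c: "\<And>i i'. i < m \<Longrightarrow> i' < m \<Longrightarrow> (\<Sum>j<m. u j i * u j i') = (if i = i' then 1 else 0)"
  shows "(\<Sum>j<m. (\<Sum>i<m. g i * u j i)^2) = (\<Sum>i<m. (g i)^2)"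
proof -
  have "(\<Sum>j<m. (\<Sum>i<m. g i * u j i)^2) = (\<Sum>j<m. \<Sum>i<m. \<Sum>i'<m. g i * g i' * (u j i * u j i'))"
    by (simp add: power2_eq_square sum_product mult_ac)
  also have "\<dots> = (\<Sum>i<m. \<Sum>i'<m. \<Sum>j<m. g i * g i' * (u j i * u j i'))"
    by (rule sum_swap3)
  also have "\<dots> = (\<Sum>i<m. \<Sum>i'<m. g i * g i' * (\<Sum>j<m. u j i * u j i'))"
    by (simp add: sum_distrib_left)
  also have "\<dots> = (\<Sum>i<m. \<Sum>i'<m. if i' = i then g i * g i else 0)"
    by (rule sum.cong[OF refl], rule sum.cong[OF refl]) (auto simp: c)
  also have "\<dots> = (\<Sum>i<m. (g i)^2)" by (simp add: power2_eq_square)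
  finally show ?thesis .
qed

lemma lp_sorted:
  fixes lam c :: "nat \<Rightarrow> real"
  assumes mono: "\<And>i j. i \<le> j \<Longrightarrow> j < k \<Longrightarrow> lam j \<le> lam i"
    and nn: "\<And>i. i < k \<Longrightarrow> 0 \<le> lam i"
    and c01: "\<And>i. i < k \<Longrightarrow> 0 \<le> c i \<and> c i \<le> 1"
    and csum: "(\<Sum>i<k. c i) \<le> real m"
  shows "(\<Sum>i\<in>{m..<k}. lam i) \<le> (\<Sum>i<k. lam i * (1 - c i))"
proof (cases "m < k")
  case False
  hence "{m..<k} = {}" by auto
  moreover have "0 \<le> (\<Sum>i<k. lam i * (1 - c i))"
    by (rule sum_nonneg) (use nn c01 in auto)
  ultimately show ?thesis by simp
next
  case True
  define t where "t = lam m"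
  have t0: "0 \<le> t" unfolding t_def using nn True by simp
  have split: "{..<k} = {..<m} \<union> {m..<k}" using True by auto
  have disj: "{..<m} \<inter> {m..<k} = {}" by auto
  have S: "\<And>g. (\<Sum>i<k. g i) = (\<Sum>i<m. g i) + (\<Sum>i\<in>{m..<k}. g i :: real)"
    unfolding split by (rule sum.union_disjoint) (auto simp: disj)
  have A1: "(\<Sum>i<m. t * (1 - c i)) \<le> (\<Sum>i<m. lam i * (1 - c i))"
    by (rule sum_mono) (use True c01 mono t_def in \<open>auto intro!: mult_right_mono\<close>)
  have A2: "(\<Sum>i\<in>{m..<k}. lam i * c i) \<le> (\<Sum>i\<in>{m..<k}. t * c i)"
    by (rule sum_mono) (use True c01 mono t_def in \<open>auto intro!: mult_right_mono\<close>)
  have E1: "(\<Sum>i\<in>{m..<k}. lam i * (1 - c i)) = (\<Sum>i\<in>{m..<k}. lam i) - (\<Sum>i\<in>{m..<k}. lam i * c i)"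
    by (simp add: algebra_simps sum_subtractf)
  have E2: "(\<Sum>i<m. t * (1 - c i)) = t * real m - t * (\<Sum>i<m. c i)"
    by (simp add: algebra_simps sum_subtractf sum_distrib_left)
  have E3: "(\<Sum>i\<in>{m..<k}. t * c i) = t * (\<Sum>i\<in>{m..<k}. c i)"
    by (simp add: sum_distrib_left)
  have "t * (\<Sum>i<k. c i) \<le> t * real m" using t0 csum by (simp add: mult_left_mono)
  hence "t * (\<Sum>i<m. c i) + t * (\<Sum>i\<in>{m..<k}. c i) \<le> t * real m"
    using S[of c] by (simp add: algebra_simps)
  thus ?thesis using S[of "\<lambda>i. lam i * (1 - c i)"] A1 A2 E1 E2 E3 by linarith
qed



lemma prod_list_mset_eq:
  fixes f :: "'a \<Rightarrow> 'b::comm_monoid_mult"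
  shows "mset xs = mset ys \<Longrightarrow> prod_list (map f xs) = prod_list (map f ys)"
proof (induction xs arbitrary: ys)
  case Nil thus ?case by simp
next
  case (Cons a xs)
  have a: "a \<in> set ys" using Cons.prems by (metis list.set_intros(1) set_mset_mset)
  have "mset xs = mset (remove1 a ys)"
    by (metis Cons.prems add_mset_remove_trivial mset.simps(2) mset_remove1)
  hence "prod_list (map f xs) = prod_list (map f (remove1 a ys))" using Cons.IH by blast
  thus ?case using prod_list_map_remove1[OF a, of f] by simp
qed

lemma prod_lin_mset:
  fixes xs ys :: "real list"
  shows "(\<Prod>a\<leftarrow>xs. [:- a, 1:]) = (\<Prod>a\<leftarrow>ys. [:- a, 1:]) \<Longrightarrow> mset xs = mset ys"
proof (induction xs arbitrary: ys)
  case Nil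
  have "degree (\<Prod>a\<leftarrow>ys. [:- a, 1:]) = length ys"
    using degree_linear_factors[of uminus ys] by simp
  thus ?case using Nil by simp
next
  case (Cons a xs)
  have "poly (\<Prod>a\<leftarrow>ys. [:- a, 1:]) a = 0" using Cons.prems[symmetric] by simp
  hence a: "a \<in> set ys" by (auto simp: poly_prod_list_zero_iff)
  have "(\<Prod>a\<leftarrow>ys. [:- a, 1:]) = [:- a, 1:] * (\<Prod>a\<leftarrow>remove1 a ys. [:- a, 1:])"
    using prod_list_map_remove1[OF a, of "\<lambda>a. [:- a, 1:]"] .
  hence "[:- a, 1:] * (\<Prod>a\<leftarrow>xs. [:- a, 1:]) = [:- a, 1:] * (\<Prod>a\<leftarrow>remove1 a ys. [:- a, 1:])"
    using Cons.prems by simp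
  hence "(\<Prod>a\<leftarrow>xs. [:- a, 1:]) = (\<Prod>a\<leftarrow>remove1 a ys. [:- a, 1:])"
    by (subst (asm) mult_left_cancel) auto
  hence "mset xs = mset (remove1 a ys)" using Cons.IH by blast
  thus ?case using a by simp
qed

lemma the_sorted_roots:
  fixes A :: "real mat" and lst :: "real list"
  assumes cp: "char_poly A = (\<Prod>a\<leftarrow>lst. [:- a, 1:])"
  defines "xs \<equiv> THE xs. sorted_wrt (\<ge>) xs \<and> char_poly A = (\<Prod>a\<leftarrow>xs. [:- a, 1:])"
  shows "sorted_wrt (\<ge>) xs \<and> mset xs = mset lst"
proof -
  define xs0 where "xs0 = rev (sort lst)"
  have m0: "mset xs0 = mset lst" unfolding xs0_def by simp
  have s0: "sorted_wrt (\<ge>) xs0" unfolding xs0_def by (simp add: sorted_wrt_rev)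
  have p0: "char_poly A = (\<Prod>a\<leftarrow>xs0. [:- a, 1:])" unfolding cp
    by (rule prod_list_mset_eq) (simp add: m0)
  have "xs = xs0" unfolding xs_def
  proof (rule the_equality)
    show "sorted_wrt (\<ge>) xs0 \<and> char_poly A = (\<Prod>a\<leftarrow>xs0. [:- a, 1:])" using s0 p0 by simp
  next
    fix ys assume ys: "sorted_wrt (\<ge>) ys \<and> char_poly A = (\<Prod>a\<leftarrow>ys. [:- a, 1:])"
    hence "mset ys = mset xs0" using p0 prod_lin_mset by metis
    moreover have "sorted (rev ys)" using ys by (simp add: sorted_wrt_rev)
    moreover have "sorted (rev xs0)" using s0 by (simp add: sorted_wrt_rev)
    ultimately have "rev ys = rev xs0"
      by (metis mset_rev properties_for_sort)
    thus "ys = xs0" by simp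
  qed
  thus ?thesis using s0 m0 by simp
qed

lemma sum_split_add: fixes g :: "nat \<Rightarrow> real" shows "(\<Sum>t<a+b. g t) = (\<Sum>t<a. g t) + (\<Sum>t<b. g (a+t))"
  by (induction b) auto

lemma expand_basis:
  fixes u :: "nat \<Rightarrow> nat \<Rightarrow> real"
  assumes c: "\<And>i i'. i < m \<Longrightarrow> i' < m \<Longrightarrow> (\<Sum>j<m. u j i * u j i') = (if i = i' then 1 else 0)"
  shows "(\<Sum>t<m. M t * y t) = (\<Sum>l<m. (\<Sum>t<m. y t * u l t) * (\<Sum>t<m. M t * u l t))"
proof -
  have "(\<Sum>l<m. (\<Sum>t<m. y t * u l t) * (\<Sum>t<m. M t * u l t))
      = (\<Sum>l<m. \<Sum>t<m. \<Sum>t'<m. M t * y t' * (u l t * u l t'))"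
    by (simp add: sum_product mult_ac)
  also have "\<dots> = (\<Sum>t<m. \<Sum>t'<m. \<Sum>l<m. M t * y t' * (u l t * u l t'))"
    by (rule sum_swap3)
  also have "\<dots> = (\<Sum>t<m. \<Sum>t'<m. M t * y t' * (\<Sum>l<m. u l t * u l t'))"
    by (simp add: sum_distrib_left)
  also have "\<dots> = (\<Sum>t<m. \<Sum>t'<m. if t' = t then M t * y t else 0)"
    by (rule sum.cong[OF refl], rule sum.cong[OF refl]) (auto simp: c)
  also have "\<dots> = (\<Sum>t<m. M t * y t)" by simp
  finally show ?thesis by simp
qed



lemma mv_entry:
  fixes A :: "real mat"
  shows "A \<in> carrier_mat n r \<Longrightarrow> z \<in> carrier_vec r \<Longrightarrow> j < n \<Longrightarrow> (A *\<^sub>v z) $ j = (\<Sum>t<r. A $$ (j,t) * z $ t)"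
  by (auto simp: scalar_prod_def lessThan_atLeast0 intro!: sum.cong)

lemma uz_from:
  assumes "\<forall>j<N. \<forall>j'<N. (\<Sum>r<n. e j r * e j' r) = (if j = j' \<and> \<mu> j \<noteq> (0::real) then 1 else 0)"
  shows "unit_or_zero N n e"
  unfolding unit_or_zero_def
proof (intro conjI allI impI)
  fix l l' assume "l < N" "l' < N" "l \<noteq> l'"
  thus "(\<Sum>i<n. e l i * e l' i) = 0" using assms by auto
next
  fix l assume l: "l < N"
  show "(\<Sum>i<n. (e l i)^2) = 1 \<or> (\<forall>i<n. e l i = 0)"
  proof (cases "\<mu> l = 0")
    case False
    thus ?thesis using assms l by (auto simp: power2_eq_square)
  next
    case True
    hence "(\<Sum>i<n. (e l i)^2) = 0" using assms l by (auto simp: power2_eq_square)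
    hence "\<forall>i\<in>{..<n}. (e l i)^2 = 0" by (subst (asm) sum_nonneg_eq_0_iff) auto
    thus ?thesis by auto
  qed
qed

lemma uz_norm_le1: "unit_or_zero N n e \<Longrightarrow> j < N \<Longrightarrow> (\<Sum>t<n. (e j t)^2) \<le> 1"
  unfolding unit_or_zero_def by auto



theorem proposition4p1:
  fixes n r p k :: nat and V W Q :: "real mat" and h :: "real vec \<Rightarrow> real vec"
  assumes "0 < r" and "r \<le> n" and "r \<le> p"
    and "V \<in> carrier_mat n r" and "W \<in> carrier_mat n p"
    and "\<And>z. z \<in> carrier_vec r \<Longrightarrow> h z \<in> carrier_vec p"
    and "Q \<in> carrier_mat n k"
    and "r \<le> min n k"
  shows "(\<Sum>i<k. Inf {sq_dist n x (col Q i) | x. x \<in> manifold_set r V W h})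
           \<ge> (\<Sum>i\<in>{p + r + 1 .. min n k}. (singular_values Q ! (i - 1))^2)"
proof -
  have V: "V \<in> carrier_mat n r" and W: "W \<in> carrier_mat n p" and Q: "Q \<in> carrier_mat n k"
    and hc: "\<And>z. z \<in> carrier_vec r \<Longrightarrow> h z \<in> carrier_vec p" using assms by auto
  define m where "m = p + r"
  define Mm where "Mm = mat n m (\<lambda>(j,t). if t < r then V $$ (j,t) else W $$ (j, t - r))"
  have Mm: "Mm \<in> carrier_mat n m" unfolding Mm_def by simp
  obtain uQ \<mu> e where Q1: "\<forall>j<k. 0 \<le> \<mu> j"
    and Q2: "\<forall>i<k. \<forall>i'<k. (\<Sum>j<k. uQ j i * uQ j i') = (if i = i' then 1 else 0)"
    and Q3: "\<forall>j<k. \<forall>t<n. (\<Sum>i<k. Q $$ (t,i) * uQ j i) = sqrt (\<mu> j) * e j t"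
    and Q4: "\<forall>j<k. \<forall>j'<k. (\<Sum>t<n. e j t * e j' t) = (if j = j' \<and> \<mu> j \<noteq> 0 then 1 else 0)"
    and Q5: "char_poly (transpose_mat Q * Q) = (\<Prod>j\<leftarrow>[0..<k]. [:- \<mu> j, 1:])"
    using svd_fun[OF Q] by blast
  obtain uM \<nu> f where M1: "\<forall>j<m. 0 \<le> \<nu> j"
    and M2: "\<forall>i<m. \<forall>i'<m. (\<Sum>j<m. uM j i * uM j i') = (if i = i' then 1 else 0)"
    and M3: "\<forall>j<m. \<forall>t<n. (\<Sum>i<m. Mm $$ (t,i) * uM j i) = sqrt (\<nu> j) * f j t"
    and M4: "\<forall>j<m. \<forall>j'<m. (\<Sum>t<n. f j t * f j' t) = (if j = j' \<and> \<nu> j \<noteq> 0 then 1 else 0)"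
    using svd_fun[OF Mm] by blast
  have uzf: "unit_or_zero m n f" by (rule uz_from[OF M4])
  have uze: "unit_or_zero k n e" by (rule uz_from[OF Q4])
  define lst where "lst = map \<mu> [0..<k]"
  have cp: "char_poly (transpose_mat Q * Q) = (\<Prod>a\<leftarrow>lst. [:- a, 1:])"
    unfolding Q5 lst_def by (simp add: comp_def)
  define xs where "xs = (THE xs. sorted_wrt (\<ge>) xs \<and> char_poly (transpose_mat Q * Q) = (\<Prod>a\<leftarrow>xs. [:- a, 1:]))"
  have xs_sorted: "sorted_wrt (\<ge>) xs" and xs_mset: "mset xs = mset lst"
    using the_sorted_roots[OF cp] unfolding xs_def by auto
  have sv: "singular_values Q = map sqrt xs" unfolding singular_values_def xs_def ..
  have len: "length xs = k" using xs_mset unfolding lst_def by (metis length_map length_upt minus_nat.diff_0 size_mset)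
  have xs_nn: "\<And>i. i < k \<Longrightarrow> 0 \<le> xs ! i"
  proof -
    fix i assume i: "i < k"
    have "xs ! i \<in> set xs" using i len by simp
    hence "xs ! i \<in> set lst" using xs_mset by (metis set_mset_mset)
    thus "0 \<le> xs ! i" using Q1 unfolding lst_def by auto
  qed
  obtain \<pi> where bij: "bij_betw \<pi> {..<length xs} {..<length lst}"
    and pi_eq: "\<forall>i<length xs. xs ! i = lst ! \<pi> i"
    using permutation_Ex_bij[OF xs_mset] by blast
  have bij': "bij_betw \<pi> {..<k} {..<k}" using bij len unfolding lst_def by simp
  have pik: "\<And>i. i < k \<Longrightarrow> \<pi> i < k" using bij' by (meson bij_betwE lessThan_iff)
  have xs_pi: "\<And>i. i < k \<Longrightarrow> xs ! i = \<mu> (\<pi> i)" using pi_eq len pik unfolding lst_def by simp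
  define R where "R = (\<Sum>i\<in>{m..<k}. xs ! i)"

  have core: "R \<le> (\<Sum>i<k. sq_dist n (X i) (col Q i))"
    if X: "\<And>i. i < k \<Longrightarrow> X i \<in> manifold_set r V W h" for X
  proof -
    define c where "c = (\<lambda>j. (\<Sum>l<m. (\<Sum>t<n. f l t * e j t)^2))"
    have per: "(\<Sum>t<n. (Q $$ (t,i))^2) - (\<Sum>l<m. (\<Sum>t<n. f l t * Q $$ (t,i))^2) \<le> sq_dist n (X i) (col Q i)"
      if i: "i < k" for i
    proof -
      obtain z where z: "z \<in> carrier_vec r" and Xi: "X i = V *\<^sub>v z + W *\<^sub>v h z"
        using X[OF i] unfolding manifold_set_def by blast
      have hz: "h z \<in> carrier_vec p" using hc[OF z] .
      define y where "y = (\<lambda>t. if t < r then z $ t else h z $ (t - r))"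
      define a where "a = (\<lambda>l. (\<Sum>t<m. y t * uM l t) * sqrt (\<nu> l))"
      have comp: "(X i) $ j = (\<Sum>l<m. a l * f l j)" if j: "j < n" for j
      proof -
        have "(X i) $ j = (\<Sum>t<r. V $$ (j,t) * z $ t) + (\<Sum>t<p. W $$ (j,t) * h z $ t)"
          unfolding Xi using V W z hz j mv_entry[OF V z j] mv_entry[OF W hz j] by simp
        also have "\<dots> = (\<Sum>t<r+p. Mm $$ (j,t) * y t)"
          unfolding sum_split_add using j by (simp add: Mm_def y_def m_def)
        also have "\<dots> = (\<Sum>t<m. Mm $$ (j,t) * y t)" unfolding m_def by (simp add: add.commute)
        also have "\<dots> = (\<Sum>l<m. (\<Sum>t<m. y t * uM l t) * (\<Sum>t<m. Mm $$ (j,t) * uM l t))"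
          by (rule expand_basis) (use M2 in auto)
        also have "\<dots> = (\<Sum>l<m. a l * f l j)"
          by (rule sum.cong[OF refl]) (use M3 j in \<open>auto simp: a_def\<close>)
        finally show ?thesis .
      qed
      have "sq_dist n (X i) (col Q i) = (\<Sum>t<n. (Q $$ (t,i) - (\<Sum>l<m. a l * f l t))^2)"
        unfolding sq_dist_def
        by (rule sum.cong[OF refl]) (use Q i comp in \<open>auto simp: power2_commute\<close>)
      also have "\<dots> \<ge> (\<Sum>t<n. (Q $$ (t,i))^2) - (\<Sum>l<m. (\<Sum>t<n. f l t * Q $$ (t,i))^2)"
        by (rule proj_lower[OF uzf])
      finally show ?thesis .
    qed
    have T1: "(\<Sum>i<k. \<Sum>t<n. (Q $$ (t,i))^2) = (\<Sum>j<k. \<mu> j)"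
    proof -
      have "(\<Sum>i<k. \<Sum>t<n. (Q $$ (t,i))^2) = (\<Sum>t<n. \<Sum>i<k. (Q $$ (t,i))^2)" by (rule sum.swap)
      also have "\<dots> = (\<Sum>t<n. \<Sum>j<k. (\<Sum>i<k. Q $$ (t,i) * uQ j i)^2)"
        by (rule sum.cong[OF refl], rule parseval[symmetric]) (use Q2 in auto)
      also have "\<dots> = (\<Sum>t<n. \<Sum>j<k. \<mu> j * (e j t)^2)"
        by (rule sum.cong[OF refl], rule sum.cong[OF refl]) (use Q1 Q3 in \<open>auto simp: power_mult_distrib\<close>)
      also have "\<dots> = (\<Sum>j<k. \<mu> j * (\<Sum>t<n. (e j t)^2))"
        by (subst sum.swap) (simp add: sum_distrib_left)
      also have "\<dots> = (\<Sum>j<k. \<mu> j)"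
        by (rule sum.cong[OF refl]) (use Q4 in \<open>auto simp: power2_eq_square\<close>)
      finally show ?thesis .
    qed
    have T2: "(\<Sum>i<k. \<Sum>l<m. (\<Sum>t<n. f l t * Q $$ (t,i))^2) = (\<Sum>j<k. \<mu> j * c j)"
    proof -
      have inner: "(\<Sum>i<k. (\<Sum>t<n. f l t * Q $$ (t,i)) * uQ j i) = sqrt (\<mu> j) * (\<Sum>t<n. f l t * e j t)"
        if j: "j < k" for l j
      proof -
        have "(\<Sum>i<k. (\<Sum>t<n. f l t * Q $$ (t,i)) * uQ j i) = (\<Sum>i<k. \<Sum>t<n. f l t * (Q $$ (t,i) * uQ j i))"
          by (simp add: sum_distrib_right mult.assoc)
        also have "\<dots> = (\<Sum>t<n. \<Sum>i<k. f l t * (Q $$ (t,i) * uQ j i))" by (rule sum.swap)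
        also have "\<dots> = (\<Sum>t<n. f l t * (sqrt (\<mu> j) * e j t))"
          by (rule sum.cong[OF refl]) (use Q3 j in \<open>auto simp: sum_distrib_left[symmetric]\<close>)
        also have "\<dots> = sqrt (\<mu> j) * (\<Sum>t<n. f l t * e j t)"
          by (simp add: sum_distrib_left mult_ac)
        finally show ?thesis .
      qed
      have "(\<Sum>i<k. \<Sum>l<m. (\<Sum>t<n. f l t * Q $$ (t,i))^2) = (\<Sum>l<m. \<Sum>i<k. (\<Sum>t<n. f l t * Q $$ (t,i))^2)"
        by (rule sum.swap)
      also have "\<dots> = (\<Sum>l<m. \<Sum>j<k. (\<Sum>i<k. (\<Sum>t<n. f l t * Q $$ (t,i)) * uQ j i)^2)"
        by (rule sum.cong[OF refl], rule parseval[symmetric]) (use Q2 in auto)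
      also have "\<dots> = (\<Sum>l<m. \<Sum>j<k. \<mu> j * (\<Sum>t<n. f l t * e j t)^2)"
        by (rule sum.cong[OF refl], rule sum.cong[OF refl]) (use Q1 inner in \<open>auto simp: power_mult_distrib\<close>)
      also have "\<dots> = (\<Sum>j<k. \<mu> j * c j)"
        unfolding c_def by (subst sum.swap) (simp add: sum_distrib_left)
      finally show ?thesis .
    qed
    have c01: "0 \<le> c j \<and> c j \<le> 1" if j: "j < k" for j
    proof
      show "0 \<le> c j" unfolding c_def by (simp add: sum_nonneg)
      have "c j \<le> (\<Sum>t<n. (e j t)^2)" unfolding c_def by (rule bessel[OF uzf])
      also have "\<dots> \<le> 1" by (rule uz_norm_le1[OF uze j])
      finally show "c j \<le> 1" .
    qed
    have csum: "(\<Sum>j<k. c j) \<le> real m"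
    proof -
      have "(\<Sum>j<k. c j) = (\<Sum>l<m. \<Sum>j<k. (\<Sum>t<n. e j t * f l t)^2)"
        unfolding c_def by (subst sum.swap) (simp add: mult.commute)
      also have "\<dots> \<le> (\<Sum>l<m. \<Sum>t<n. (f l t)^2)"
        by (rule sum_mono) (rule bessel[OF uze])
      also have "\<dots> \<le> (\<Sum>l<m. 1)"
        by (rule sum_mono) (rule uz_norm_le1[OF uzf], simp)
      finally show ?thesis by simp
    qed
    have lp: "R \<le> (\<Sum>j<k. \<mu> j * (1 - c j))"
    proof -
      have "(\<Sum>j<k. \<mu> j * (1 - c j)) = (\<Sum>i<k. \<mu> (\<pi> i) * (1 - c (\<pi> i)))"
        using sum.reindex_bij_betw[OF bij', of "\<lambda>j. \<mu> j * (1 - c j)"] by simp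
      also have "\<dots> = (\<Sum>i<k. xs ! i * (1 - (c \<circ> \<pi>) i))"
        by (rule sum.cong[OF refl]) (simp add: xs_pi)
      finally have eq: "(\<Sum>j<k. \<mu> j * (1 - c j)) = (\<Sum>i<k. xs ! i * (1 - (c \<circ> \<pi>) i))" .
      have cs: "(\<Sum>i<k. (c \<circ> \<pi>) i) = (\<Sum>j<k. c j)"
        using sum.reindex_bij_betw[OF bij', of c] by simp
      have "R \<le> (\<Sum>i<k. xs ! i * (1 - (c \<circ> \<pi>) i))"
        unfolding R_def
      proof (rule lp_sorted)
        fix i j assume "i \<le> j" "j < k"
        thus "xs ! j \<le> xs ! i" using xs_sorted len
          by (metis order.refl le_neq_implies_less sorted_wrt_nth_less)
      next
        fix i assume "i < k" thus "0 \<le> xs ! i" by (rule xs_nn)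
      next
        fix i assume "i < k" thus "0 \<le> (c \<circ> \<pi>) i \<and> (c \<circ> \<pi>) i \<le> 1" using c01 pik by simp
      next
        show "(\<Sum>i<k. (c \<circ> \<pi>) i) \<le> real m" using cs csum by simp
      qed
      thus ?thesis using eq by simp
    qed
    have "(\<Sum>j<k. \<mu> j * (1 - c j)) = (\<Sum>i<k. \<Sum>t<n. (Q $$ (t,i))^2) - (\<Sum>i<k. \<Sum>l<m. (\<Sum>t<n. f l t * Q $$ (t,i))^2)"
      unfolding T1 T2 by (simp add: algebra_simps sum_subtractf)
    also have "\<dots> = (\<Sum>i<k. (\<Sum>t<n. (Q $$ (t,i))^2) - (\<Sum>l<m. (\<Sum>t<n. f l t * Q $$ (t,i))^2))"
      by (simp add: sum_subtractf)
    also have "\<dots> \<le> (\<Sum>i<k. sq_dist n (X i) (col Q i))"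
      by (rule sum_mono) (rule per, simp)
    finally show ?thesis using lp by simp
  qed

  define S where "S = (\<lambda>i. {sq_dist n x (col Q i) | x. x \<in> manifold_set r V W h})"
  have mem0: "V *\<^sub>v 0\<^sub>v r + W *\<^sub>v h (0\<^sub>v r) \<in> manifold_set r V W h"
    unfolding manifold_set_def by auto
  have ne: "S i \<noteq> {}" for i unfolding S_def using mem0 by blast
  have Rle: "R \<le> (\<Sum>i<k. Inf (S i))"
  proof (rule ccontr)
    assume "\<not> R \<le> (\<Sum>i<k. Inf (S i))"
    hence d: "0 < R - (\<Sum>i<k. Inf (S i))" by simp
    define \<epsilon> where "\<epsilon> = (R - (\<Sum>i<k. Inf (S i))) / (real k + 1)"
    have eps: "0 < \<epsilon>" unfolding \<epsilon>_def using d by simp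
    have "\<forall>i. \<exists>x. i < k \<longrightarrow> x \<in> manifold_set r V W h \<and> sq_dist n x (col Q i) < Inf (S i) + \<epsilon>"
    proof
      fix i
      have "Inf (S i) < Inf (S i) + \<epsilon>" using eps by simp
      then obtain y where "y \<in> S i" "y < Inf (S i) + \<epsilon>" using cInf_lessD[OF ne] by blast
      thus "\<exists>x. i < k \<longrightarrow> x \<in> manifold_set r V W h \<and> sq_dist n x (col Q i) < Inf (S i) + \<epsilon>"
        unfolding S_def by blast
    qed
    then obtain X where X: "\<And>i. i < k \<Longrightarrow> X i \<in> manifold_set r V W h \<and> sq_dist n (X i) (col Q i) < Inf (S i) + \<epsilon>"
      by metis
    have "R \<le> (\<Sum>i<k. sq_dist n (X i) (col Q i))" by (rule core) (use X in auto)
    also have "\<dots> \<le> (\<Sum>i<k. Inf (S i) + \<epsilon>)" by (rule sum_mono) (use X in \<open>auto intro: less_imp_le\<close>)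
    also have "\<dots> = (\<Sum>i<k. Inf (S i)) + real k * \<epsilon>" by (simp add: sum.distrib)
    finally have "R \<le> (\<Sum>i<k. Inf (S i)) + real k * \<epsilon>" .
    moreover have "real k * \<epsilon> < R - (\<Sum>i<k. Inf (S i))"
    proof -
      have "real k * \<epsilon> < (real k + 1) * \<epsilon>" using eps by simp
      also have "\<dots> = R - (\<Sum>i<k. Inf (S i))" unfolding \<epsilon>_def by simp
      finally show ?thesis .
    qed
    ultimately show False by simp
  qed
  define l where "l = min n k"
  have lk: "l \<le> k" unfolding l_def by simp
  have "(\<Sum>i\<in>{p + r + 1 .. min n k}. (singular_values Q ! (i - 1))^2)
      = (\<Sum>i\<in>Suc ` {m..<l}. xs ! (i - 1))"
  proof (rule sum.cong)
    show "{p + r + 1..min n k} = Suc ` {m..<l}" unfolding m_def l_def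
      by (simp add: image_Suc_atLeastLessThan atLeastLessThanSuc_atLeastAtMost)
  next
    fix i assume i: "i \<in> Suc ` {m..<l}"
    hence "i - 1 < k" using lk by auto
    thus "(singular_values Q ! (i - 1))^2 = xs ! (i - 1)" unfolding sv using len xs_nn by simp
  qed
  also have "\<dots> = (\<Sum>i\<in>{m..<l}. xs ! i)"
    using sum.reindex[of Suc "{m..<l}" "\<lambda>i. xs ! (i - 1)"] by (simp add: comp_def)
  also have "\<dots> \<le> R" unfolding R_def
    by (rule sum_mono2) (use lk xs_nn in auto)
  finally show ?thesis using Rle unfolding S_def by simp
qed


end
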